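(* Assume the setting below (in particular that $\mu^c_{J}$ concentrates on $\mathcal{B}$). For each $n$, the unique stationary distribution on $\mathcal{B}_n$ of the long-range Kawasaki dynamics is $$\nu^n_{J,\beta,q}(\sigma)= \mu^c_{J}(\sigma\mid N(\sigma)=n)= \frac{\mu^c_J(\sigma)\mathbb{1}_{\{N(\sigma)=n\}}}{\mu^c_J(\{N=n\})}.$$
   Context: Let $c\in\mathbb{R}$, $\beta\geq0$, $q\in(0,1)$ and $J:\mathbb{Z}\times\mathbb{Z}\to\mathbb{R}$ with $J(i,j)=J(j,i)\geq0$, $J(i,i)=0$. Spin configurations are $\sigma\in\{-1,+1\}^{\mathbb{Z}}$; $\mathcal{B}$ is the set of configurations for which there exist $a,b\in\mathbb{Z}$ with $\sigma_{a-i}=-1$, $\sigma_{b+i}=+1$ for all $i\in\mathbb{N}$. $H_J(\sigma)=\frac12\sum_{i,j}J(i,j)\mathbb{1}_{\{\sigma_i\neq\sigma_j\}}$, $f_c(\sigma)=2\sum_{i=1}^\infty(i-c)\mathbb{1}_{\{\sigma_i=-1\}}-2\sum_{i=-\infty}^0(i-c)\mathbb{1}_{\{\sigma_i=1\}}$, $\mu^c_J(\sigma)\propto e^{-\beta H_J(\sigma)}q^{f_c(\sigma)}$, assumed concentrated on $\mathcal{B}$. For $\sigma\in\mathcal{B}$, $N(\sigma)=\#\{i\geq1:\sigma_i=-1\}-\#\{i\leq 0:\sigma_i=+1\}$ and $\mathcal{B}_n=\{\sigma\in\mathcal{B}:N(\sigma)=n\}$. Dynamics: if $\sigma'$ agrees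 with $\sigma$ except at sites $k,\ell$ where $\sigma_k=1,\sigma_\ell=-1$, $\sigma'_k=-1,\sigma'_\ell=1$, then $\sigma\to\sigma'$ at rate $\frac12 q^{k-\ell}\big(1-\tanh\big(\frac{\beta}{2}\sum_{i\neq \ell,k}(J(i,k)\sigma_k\sigma_i + J(i,\ell)\sigma_\ell\sigma_i)\big)\big)$; other transitions have rate $0$. These dynamics preserve $N$. *)

theory Defs
  imports "HOL-Analysis.Analysis"
begin

definition spin_configs :: "(int \<Rightarrow> int) set" where
  "spin_configs = {\<sigma>. \<forall>i. \<sigma> i = -1 \<or> \<sigma> i = 1}"

definition Bset :: "(int \<Rightarrow> int) set" where
  "Bset = {\<sigma> \<in> spin_configs. \<exists>a b. \<forall>i::nat. i \<ge> 1 \<longrightarrow> \<sigma> (a - int i) = -1 \<and> \<sigma> (b + int i) = 1}"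

definition hamiltonian :: "(int \<Rightarrow> int \<Rightarrow> real) \<Rightarrow> (int \<Rightarrow> int) \<Rightarrow> real" where
  "hamiltonian J \<sigma> = (1/2) * (\<Sum>\<^sub>\<infinity>(i,j)\<in>UNIV. J i j * (if \<sigma> i \<noteq> \<sigma> j then 1 else 0))"

definition f_c :: "real \<Rightarrow> (int \<Rightarrow> int) \<Rightarrow> real" where
  "f_c c \<sigma> = 2 * (\<Sum>\<^sub>\<infinity>i\<in>{1..}. (real_of_int i - c) * (if \<sigma> i = -1 then 1 else 0))
             - 2 * (\<Sum>\<^sub>\<infinity>i\<in>{..0}. (real_of_int i - c) * (if \<sigma> i = 1 then 1 else 0))"

definition gibbs_weight :: "(int \<Rightarrow> int \<Rightarrow> real) \<Rightarrow> real \<Rightarrow> real \<Rightarrow> real \<Rightarrow> (int \<Rightarrow> int) \<Rightarrow> real" where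
  "gibbs_weight J \<beta> q c \<sigma> = exp (- \<beta> * hamiltonian J \<sigma>) * q powr (f_c c \<sigma>)"

text \<open>"mu^c_J is concentrated on B": the Hamiltonian is finite (summable) on every
  configuration of B, and the Gibbs weights over B have a finite positive total mass.\<close>
definition concentrated_on_B :: "(int \<Rightarrow> int \<Rightarrow> real) \<Rightarrow> real \<Rightarrow> real \<Rightarrow> real \<Rightarrow> bool" where
  "concentrated_on_B J \<beta> q c \<longleftrightarrow>
     (\<forall>\<sigma>\<in>Bset. (\<lambda>(i,j). J i j * (if \<sigma> i \<noteq> \<sigma> j then 1 else 0)) summable_on UNIV) \<and>
     gibbs_weight J \<beta> q c summable_on Bset \<and>
     (\<Sum>\<^sub>\<infinity>\<sigma>\<in>Bset. gibbs_weight J \<beta> q c \<sigma>) > 0"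

text \<open>The probability measure mu^c_J on B (point masses).\<close>
definition mu :: "(int \<Rightarrow> int \<Rightarrow> real) \<Rightarrow> real \<Rightarrow> real \<Rightarrow> real \<Rightarrow> (int \<Rightarrow> int) \<Rightarrow> real" where
  "mu J \<beta> q c \<sigma> = (if \<sigma> \<in> Bset
     then gibbs_weight J \<beta> q c \<sigma> / (\<Sum>\<^sub>\<infinity>\<tau>\<in>Bset. gibbs_weight J \<beta> q c \<tau>) else 0)"

text \<open>The conserved quantity N and the sets B_n.\<close>
definition Ncount :: "(int \<Rightarrow> int) \<Rightarrow> int" where
  "Ncount \<sigma> = int (card {i::int. i \<ge> 1 \<and> \<sigma> i = -1}) - int (card {i::int. i \<le> 0 \<and> \<sigma> i = 1})"

definition Bn :: "int \<Rightarrow> (int \<Rightarrow> int) set" where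
  "Bn n = {\<sigma> \<in> Bset. Ncount \<sigma> = n}"

definition nu :: "(int \<Rightarrow> int \<Rightarrow> real) \<Rightarrow> real \<Rightarrow> real \<Rightarrow> real \<Rightarrow> int \<Rightarrow> (int \<Rightarrow> int) \<Rightarrow> real" where
  "nu J \<beta> q c n \<sigma> = mu J \<beta> q c \<sigma> * (if Ncount \<sigma> = n then 1 else 0)
                      / (\<Sum>\<^sub>\<infinity>\<tau>\<in>Bn n. mu J \<beta> q c \<tau>)"

definition swap_spins :: "(int \<Rightarrow> int) \<Rightarrow> int \<Rightarrow> int \<Rightarrow> (int \<Rightarrow> int)" where
  "swap_spins \<sigma> k l = \<sigma>(k := -1, l := 1)"

definition move_rate :: "(int \<Rightarrow> int \<Rightarrow> real) \<Rightarrow> real \<Rightarrow> real \<Rightarrow> (int \<Rightarrow> int) \<Rightarrow> int \<Rightarrow> int \<Rightarrow> real" where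
  "move_rate J \<beta> q \<sigma> k l = (1/2) * q powr (real_of_int (k - l)) *
     (1 - tanh ((\<beta> / 2) * (\<Sum>\<^sub>\<infinity>i\<in>UNIV - {l, k}.
        J i k * real_of_int (\<sigma> k * \<sigma> i) + J i l * real_of_int (\<sigma> l * \<sigma> i))))"

text \<open>Transition rate sigma -> sigma' of the long-range Kawasaki dynamics
  (the pair (k,l) is uniquely determined by sigma and sigma').\<close>
definition kawasaki_rate :: "(int \<Rightarrow> int \<Rightarrow> real) \<Rightarrow> real \<Rightarrow> real \<Rightarrow> (int \<Rightarrow> int) \<Rightarrow> (int \<Rightarrow> int) \<Rightarrow> real" where
  "kawasaki_rate J \<beta> q \<sigma> \<sigma>' =
     (if \<exists>k l. \<sigma> k = 1 \<and> \<sigma> l = -1 \<and> \<sigma>' = swap_spins \<sigma> k l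
      then (case (SOME (k, l). \<sigma> k = 1 \<and> \<sigma> l = -1 \<and> \<sigma>' = swap_spins \<sigma> k l) of
              (k, l) \<Rightarrow> move_rate J \<beta> q \<sigma> k l)
      else 0)"

text \<open>Stationarity (global balance) of a distribution p on a countable state space S
  for a continuous-time Markov chain with rates r: total rate out of each state is finite
  and the probability flux into each state equals the flux out of it.\<close>
definition stationary_on :: "('s set) \<Rightarrow> ('s \<Rightarrow> 's \<Rightarrow> real) \<Rightarrow> ('s \<Rightarrow> real) \<Rightarrow> bool" where
  "stationary_on S r p \<longleftrightarrow>
     (\<forall>y\<in>S. r y summable_on (S - {y}) \<and>
        ((\<lambda>x. p x * r x y) has_sum (p y * (\<Sum>\<^sub>\<infinity>z\<in>S - {y}. r y z))) (S - {y}))"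

definition prob_dist_on :: "('s set) \<Rightarrow> ('s \<Rightarrow> real) \<Rightarrow> bool" where
  "prob_dist_on S p \<longleftrightarrow> (\<forall>x\<in>S. p x \<ge> 0) \<and> (p has_sum 1) S"

end

theory Submission
  imports Defs
begin

lemma summable_bound:
  fixes f g :: "'a \<Rightarrow> real"
  assumes "g summable_on A" "\<And>x. x\<in>A \<Longrightarrow> \<bar>f x\<bar> \<le> g x"
  shows "f summable_on A"
proof -
  have "(\<lambda>x. \<bar>f x\<bar>) summable_on A"
    by (rule summable_on_comparison_test[OF assms(1)]) (use assms(2) in auto)
  then show ?thesis
    using summable_on_iff_abs_summable_on_real by (auto simp: real_norm_def)
qed

lemma summable_on_diffR:
  fixes f g :: "'a \<Rightarrow> real"
  assumes "f summable_on A" "g summable_on A"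
  shows "(\<lambda>x. f x - g x) summable_on A"
  using summable_on_add[OF assms(1) summable_on_uminus[THEN iffD2, OF assms(2)]] by simp

lemma infsum_diffR:
  fixes f g :: "'a \<Rightarrow> real"
  assumes "f summable_on A" "g summable_on A"
  shows "infsum (\<lambda>x. f x - g x) A = infsum f A - infsum g A"
  using infsum_add[OF assms(1) summable_on_uminus[THEN iffD2, OF assms(2)]] by (simp add: infsum_uminus)

lemma infsum_swap_sq:
  fixes f :: "'a \<times> 'a \<Rightarrow> real"
  shows "infsum f (S \<times> S) = infsum (\<lambda>(x,y). f (y,x)) (S \<times> S)"
proof -
  have b: "bij_betw prod.swap (S \<times> S) (S \<times> S)"
    by (rule bij_betwI[of _ _ _ prod.swap]) auto
  show ?thesis
    using infsum_reindex_bij_betw[OF b, of f] by (simp add: case_prod_unfold prod.swap_def)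
qed

lemma liouville:
  fixes c :: "'s \<Rightarrow> 's \<Rightarrow> real" and h :: "'s \<Rightarrow> real" and S :: "'s set"
  assumes sym: "\<And>x y. x\<in>S \<Longrightarrow> y\<in>S \<Longrightarrow> c x y = c y x"
  and cnn: "\<And>x y. x\<in>S \<Longrightarrow> y\<in>S \<Longrightarrow> c x y \<ge> 0"
  and summ: "(\<lambda>(x,y). c x y) summable_on S \<times> S"
  and hnn: "\<And>x. x\<in>S \<Longrightarrow> h x \<ge> 0"
  and harm: "\<And>y. y\<in>S \<Longrightarrow> ((\<lambda>x. c y x * h x) has_sum (h y * (\<Sum>\<^sub>\<infinity>x\<in>S. c y x))) S"
  and conn: "\<And>u::'s\<Rightarrow>real. (\<forall>x\<in>S. \<forall>y\<in>S. c x y > 0 \<longrightarrow> u x = u y) \<Longrightarrow> (\<forall>x\<in>S. \<forall>y\<in>S. u x = u y)"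
  shows "\<forall>x\<in>S. \<forall>y\<in>S. h x = h y"
proof -
  have row: "c y summable_on S" if "y \<in> S" for y
    using summable_on_SigmaD1[of "\<lambda>x y. c x y" S "\<lambda>_. S" y] summ that by auto
  have key: "\<forall>x\<in>S. \<forall>y\<in>S. c x y > 0 \<longrightarrow> min (h x) M = min (h y) M" for M :: real
  proof -
    define u where "u x = min (h x) M" for x
    have ub: "\<bar>u x\<bar> \<le> \<bar>M\<bar>" if "x \<in> S" for x
      using hnn[OF that] unfolding u_def by auto
    have cS: "(\<lambda>p. c (fst p) (snd p)) summable_on S \<times> S"
      using summ by (simp add: case_prod_unfold)
    have bnd: "(\<lambda>p. f p) summable_on S \<times> S"
      if "\<And>p. p \<in> S \<times> S \<Longrightarrow> \<bar>f p\<bar> \<le> K * c (fst p) (snd p)" for f K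
    proof (rule summable_bound[OF _ that])
      show "(\<lambda>p. K * c (fst p) (snd p)) summable_on S \<times> S"
        using summable_on_cmult_right[OF cS] by simp
    qed
    define F where "F = (\<lambda>y x. c y x * (u x - u y))"
    have F_sum: "(\<lambda>(y,x). F y x) summable_on S \<times> S"
      unfolding case_prod_unfold
    proof (rule bnd[where K = "2*\<bar>M\<bar>"])
      fix p assume p: "p \<in> S \<times> S"
      have "fst p \<in> S" "snd p \<in> S" using p by auto
      then have "\<bar>u (snd p) - u (fst p)\<bar> \<le> 2*\<bar>M\<bar>" using ub[of "fst p"] ub[of "snd p"] by arith
      then show "\<bar>F (fst p) (snd p)\<bar> \<le> 2*\<bar>M\<bar> * c (fst p) (snd p)"
        unfolding F_def using cnn[of "fst p" "snd p"] p
        by (auto simp: abs_mult mult.commute intro: mult_left_mono)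
    qed
    define g where "g y = (\<Sum>\<^sub>\<infinity>x\<in>S. F y x)" for y
    have Frow: "F y summable_on S" if "y \<in> S" for y
      using summable_on_SigmaD1[of F S "\<lambda>_. S" y] F_sum that by auto
    have gle: "g y \<le> 0" if y: "y \<in> S" for y
    proof (cases "h y \<le> M")
      case True
      have s1: "(\<lambda>x. c y x * h x) summable_on S" using harm[OF y] by (auto simp: summable_on_def)
      have s2: "(\<lambda>x. c y x * h y) summable_on S" using summable_on_cmult_left[OF row[OF y]] by simp
      have s3: "(\<lambda>x. c y x * h x - c y x * h y) summable_on S"
        using summable_on_diffR[OF s1 s2] .
      have "g y \<le> (\<Sum>\<^sub>\<infinity>x\<in>S. c y x * h x - c y x * h y)"
        unfolding g_def
      proof (rule infsum_mono[OF Frow[OF y] s3])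
        fix x assume x: "x \<in> S"
        have "u x - u y \<le> h x - h y" using True unfolding u_def by auto
        then show "F y x \<le> c y x * h x - c y x * h y"
          unfolding F_def using cnn[OF y x] by (simp add: right_diff_distrib[symmetric] mult_left_mono)
      qed
      also have "\<dots> = (\<Sum>\<^sub>\<infinity>x\<in>S. c y x * h x) - (\<Sum>\<^sub>\<infinity>x\<in>S. c y x * h y)"
        by (rule infsum_diffR[OF s1 s2])
      also have "\<dots> = 0"
        using infsumI[OF harm[OF y]] infsum_cmult_left[OF row[OF y], of "h y"]
        by (simp add: mult.commute)
      finally show ?thesis .
    next
      case False
      have "g y \<le> (\<Sum>\<^sub>\<infinity>x\<in>S. (0::real))"
        unfolding g_def
      proof (rule infsum_mono[OF Frow[OF y]])
        fix x assume x: "x \<in> S"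
        have "u x - u y \<le> 0" using False unfolding u_def by auto
        then show "F y x \<le> 0" unfolding F_def using cnn[OF y x] by (simp add: mult_nonpos_nonneg mult_le_0_iff)
      qed auto
      then show ?thesis by simp
    qed
    have g_sum: "g summable_on S"
      using summable_on_Sigma_banach[of F S "\<lambda>_. S"] F_sum unfolding g_def by auto
    have g_tot: "(\<Sum>\<^sub>\<infinity>y\<in>S. g y) = (\<Sum>\<^sub>\<infinity>(y,x)\<in>S\<times>S. F y x)"
      using infsum_Sigma'_banach[of F S "\<lambda>_. S"] F_sum unfolding g_def by auto
    define A where "A = (\<lambda>(y,x). c y x * u x)"
    define B where "B = (\<lambda>(y,x). c y x * u y)"
    have A_sum: "A summable_on S \<times> S" unfolding A_def case_prod_unfold
    proof (rule bnd[where K = "\<bar>M\<bar>"])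
      fix p assume p: "p \<in> S \<times> S"
      obtain a b where pab: "p = (a,b)" "a \<in> S" "b \<in> S" using p by auto
      show "\<bar>c (fst p) (snd p) * u (snd p)\<bar> \<le> \<bar>M\<bar> * c (fst p) (snd p)"
        using pab cnn[of a b] ub[of b] by (auto simp: abs_mult mult.commute intro: mult_right_mono)
    qed
    have B_sum: "B summable_on S \<times> S" unfolding B_def case_prod_unfold
    proof (rule bnd[where K = "\<bar>M\<bar>"])
      fix p assume p: "p \<in> S \<times> S"
      obtain a b where pab: "p = (a,b)" "a \<in> S" "b \<in> S" using p by auto
      show "\<bar>c (fst p) (snd p) * u (fst p)\<bar> \<le> \<bar>M\<bar> * c (fst p) (snd p)"
        using pab cnn[of a b] ub[of a] by (auto simp: abs_mult mult.commute intro: mult_right_mono)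
    qed
    have AB: "infsum A (S \<times> S) = infsum B (S \<times> S)"
    proof -
      have "infsum A (S \<times> S) = infsum (\<lambda>(x,y). A (y,x)) (S \<times> S)" by (rule infsum_swap_sq)
      also have "\<dots> = infsum B (S \<times> S)"
        by (rule infsum_cong) (auto simp: A_def B_def sym)
      finally show ?thesis .
    qed
    have "(\<Sum>\<^sub>\<infinity>(y,x)\<in>S\<times>S. F y x) = infsum (\<lambda>p. A p - B p) (S \<times> S)"
      by (rule infsum_cong) (auto simp: F_def A_def B_def algebra_simps)
    also have "\<dots> = 0" using infsum_diffR[OF A_sum B_sum] AB by simp
    finally have g0: "(\<Sum>\<^sub>\<infinity>y\<in>S. g y) = 0" using g_tot by simp
    have gz: "g y = 0" if "y \<in> S" for y
    proof -
      have "(\<lambda>y. - g y) y = 0"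
        by (rule nonneg_infsum_le_0D[of _ S]) (use g0 g_sum gle that in \<open>auto simp: infsum_uminus summable_on_uminus\<close>)
      then show ?thesis by simp
    qed
    define E where "E = (\<lambda>(y,x). c y x * (u x - u y)^2)"
    define A2 where "A2 = (\<lambda>(y,x). c y x * u x * (u x - u y))"
    define B2 where "B2 = (\<lambda>(y,x). u y * F y x)"
    have A2_sum: "A2 summable_on S \<times> S" unfolding A2_def case_prod_unfold
    proof (rule bnd[where K = "2*M^2"])
      fix p assume p: "p \<in> S \<times> S"
      obtain a b where pab: "p = (a,b)" "a \<in> S" "b \<in> S" using p by auto
      have "\<bar>u b\<bar> * \<bar>u b - u a\<bar> \<le> \<bar>M\<bar> * (2*\<bar>M\<bar>)"
        using ub[OF pab(2)] ub[OF pab(3)] by (intro mult_mono) auto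
      then have "\<bar>u b\<bar> * \<bar>u b - u a\<bar> \<le> 2 * M^2" by (simp add: power2_eq_square)
      then have "c a b * (\<bar>u b\<bar> * \<bar>u b - u a\<bar>) \<le> c a b * (2 * M^2)"
        using cnn[of a b] pab by (intro mult_left_mono) auto
      then show "\<bar>c (fst p) (snd p) * u (snd p) * (u (snd p) - u (fst p))\<bar> \<le> 2 * M\<^sup>2 * c (fst p) (snd p)"
        using pab cnn[of a b] by (simp add: abs_mult mult_ac)
    qed
    have B2_sum: "B2 summable_on S \<times> S" unfolding B2_def case_prod_unfold F_def
    proof (rule bnd[where K = "2*M^2"])
      fix p assume p: "p \<in> S \<times> S"
      obtain a b where pab: "p = (a,b)" "a \<in> S" "b \<in> S" using p by auto
      have "\<bar>u a\<bar> * \<bar>u b - u a\<bar> \<le> \<bar>M\<bar> * (2*\<bar>M\<bar>)"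
        using ub[OF pab(2)] ub[OF pab(3)] by (intro mult_mono) auto
      then have "\<bar>u a\<bar> * \<bar>u b - u a\<bar> \<le> 2 * M^2" by (simp add: power2_eq_square)
      then have "c a b * (\<bar>u a\<bar> * \<bar>u b - u a\<bar>) \<le> c a b * (2 * M^2)"
        using cnn[of a b] pab by (intro mult_left_mono) auto
      then show "\<bar>u (fst p) * (c (fst p) (snd p) * (u (snd p) - u (fst p)))\<bar> \<le> 2 * M\<^sup>2 * c (fst p) (snd p)"
        using pab cnn[of a b] by (simp add: abs_mult mult_ac)
    qed
    have B20: "infsum B2 (S \<times> S) = 0"
    proof -
      have "infsum B2 (S \<times> S) = (\<Sum>\<^sub>\<infinity>y\<in>S. \<Sum>\<^sub>\<infinity>x\<in>S. u y * F y x)"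
        using infsum_Sigma'_banach[of "\<lambda>y x. u y * F y x" S "\<lambda>_. S"] B2_sum unfolding B2_def by auto
      also have "\<dots> = (\<Sum>\<^sub>\<infinity>y\<in>S. u y * g y)"
        by (rule infsum_cong) (simp add: g_def infsum_cmult_right')
      also have "\<dots> = (\<Sum>\<^sub>\<infinity>y\<in>S. (0::real))" by (rule infsum_cong) (simp add: gz)
      also have "\<dots> = 0" by simp
      finally show ?thesis .
    qed
    have A20: "infsum A2 (S \<times> S) = - infsum B2 (S \<times> S)"
    proof -
      have "infsum A2 (S \<times> S) = infsum (\<lambda>(x,y). A2 (y,x)) (S \<times> S)" by (rule infsum_swap_sq)
      also have "\<dots> = infsum (\<lambda>p. - B2 p) (S \<times> S)"
        by (rule infsum_cong) (auto simp: A2_def B2_def F_def sym algebra_simps)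
      finally show ?thesis by (simp add: infsum_uminus)
    qed
    have E_eq: "infsum E (S \<times> S) = infsum A2 (S \<times> S) - infsum B2 (S \<times> S)"
    proof -
      have "infsum E (S \<times> S) = infsum (\<lambda>p. A2 p - B2 p) (S \<times> S)"
        by (rule infsum_cong) (auto simp: E_def A2_def B2_def F_def power2_eq_square algebra_simps)
      then show ?thesis using infsum_diffR[OF A2_sum B2_sum] by simp
    qed
    have E0: "infsum E (S \<times> S) = 0" using E_eq A20 B20 by simp
    have E_sum: "E summable_on S \<times> S"
    proof -
      have "E = (\<lambda>p. A2 p - B2 p)"
        by (auto simp: E_def A2_def B2_def F_def power2_eq_square algebra_simps fun_eq_iff)
      then show ?thesis using summable_on_diffR[OF A2_sum B2_sum] by simp
    qed
    show ?thesis
    proof (intro ballI impI)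
      fix x y assume x: "x \<in> S" and y: "y \<in> S" and cpos: "c x y > 0"
      have "E (x,y) = 0"
        by (rule nonneg_infsum_le_0D[of E "S \<times> S"]) (use E0 E_sum x y cnn in \<open>auto simp: E_def\<close>)
      then have "u y = u x" using cpos by (simp add: E_def)
      then show "min (h x) M = min (h y) M" by (simp add: u_def)
    qed
  qed
  show ?thesis
  proof (intro ballI)
    fix x y assume x: "x \<in> S" and y: "y \<in> S"
    define M where "M = max (h x) (h y)"
    have "\<forall>x\<in>S. \<forall>y\<in>S. min (h x) M = min (h y) M"
      by (rule conn) (use key in blast)
    then have "min (h x) M = min (h y) M" using x y by blast
    then show "h x = h y" by (simp add: M_def)
  qed
qed

definition Aset :: "(int \<Rightarrow> int) \<Rightarrow> int set" where
  "Aset x = {i. i \<ge> 1 \<and> x i = -1}"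
definition Bs :: "(int \<Rightarrow> int) \<Rightarrow> int set" where
  "Bs x = {i. i \<le> 0 \<and> x i = 1}"
definition Gi :: "(int \<Rightarrow> int) \<Rightarrow> int" where
  "Gi x = (\<Sum>i\<in>Aset x. i) + (\<Sum>i\<in>Bs x. - i)"
definition stepc :: "int \<Rightarrow> int \<Rightarrow> int" where
  "stepc m = (\<lambda>i. if i \<le> m then -1 else 1)"

lemma spin_cases: "x \<in> Bset \<Longrightarrow> x i = -1 \<or> x i = 1"
  by (auto simp: Bset_def spin_configs_def)

lemma Bset_tails:
  assumes "x \<in> Bset"
  obtains a b where "\<And>j. j < a \<Longrightarrow> x j = -1" "\<And>j. j > b \<Longrightarrow> x j = 1"
proof -
  obtain a b where ab: "\<forall>i::nat. i \<ge> 1 \<longrightarrow> x (a - int i) = -1 \<and> x (b + int i) = 1"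
    using assms by (auto simp: Bset_def)
  have 1: "x j = -1" if "j < a" for j
    using ab[rule_format, of "nat (a - j)"] that by auto
  have 2: "x j = 1" if "j > b" for j
    using ab[rule_format, of "nat (j - b)"] that by auto
  show ?thesis using that 1 2 by blast
qed

lemma finite_Aset: "x \<in> Bset \<Longrightarrow> finite (Aset x)"
proof -
  assume x: "x \<in> Bset"
  obtain a b where ab: "\<And>j. j < a \<Longrightarrow> x j = -1" "\<And>j. j > b \<Longrightarrow> x j = 1"
    using Bset_tails[OF x] by blast
  have "Aset x \<subseteq> {1..b}"
  proof
    fix i assume "i \<in> Aset x"
    then have i: "i \<ge> 1" "x i = -1" by (auto simp: Aset_def)
    then have "\<not> i > b" using ab(2)[of i] by auto
    then show "i \<in> {1..b}" using i by auto
  qed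
  then show ?thesis using finite_subset by blast
qed

lemma finite_Bs: "x \<in> Bset \<Longrightarrow> finite (Bs x)"
proof -
  assume x: "x \<in> Bset"
  obtain a b where ab: "\<And>j. j < a \<Longrightarrow> x j = -1" "\<And>j. j > b \<Longrightarrow> x j = 1"
    using Bset_tails[OF x] by blast
  have "Bs x \<subseteq> {a..0}"
  proof
    fix i assume "i \<in> Bs x"
    then have i: "i \<le> 0" "x i = 1" by (auto simp: Bs_def)
    then have "\<not> i < a" using ab(1)[of i] by auto
    then show "i \<in> {a..0}" using i by auto
  qed
  then show ?thesis using finite_subset by blast
qed

lemma Ncount_alt: "Ncount x = int (card (Aset x)) - int (card (Bs x))"
  by (simp add: Ncount_def Aset_def Bs_def)

lemma Gi_nonneg: "Gi x \<ge> 0"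
  unfolding Gi_def by (intro add_nonneg_nonneg sum_nonneg) (auto simp: Aset_def Bs_def)

lemma GA_nonneg: "(\<Sum>i\<in>Aset x. i) \<ge> 0"
  by (rule sum_nonneg) (simp add: Aset_def)

lemma GB_nonneg: "(\<Sum>i\<in>Bs x. - i) \<ge> 0"
  by (rule sum_nonneg) (simp add: Bs_def)

lemma plus_site_ge: assumes "x \<in> Bset" "x k = 1" shows "k \<ge> - (\<Sum>i\<in>Bs x. - i)"
proof (cases "k \<ge> 1")
  case True then show ?thesis using GB_nonneg[of x] by linarith
next
  case False
  then have kB: "k \<in> Bs x" using assms(2) by (simp add: Bs_def)
  have nn: "\<And>i. i \<in> Bs x - {k} \<Longrightarrow> 0 \<le> - i" by (simp add: Bs_def)
  have "- k \<le> (\<Sum>i\<in>Bs x. - i)"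
    by (rule member_le_sum[OF kB nn finite_Bs[OF assms(1)]])
  then show ?thesis by linarith
qed

lemma minus_site_le: assumes "x \<in> Bset" "x l = -1" shows "l \<le> (\<Sum>i\<in>Aset x. i)"
proof (cases "l \<le> 0")
  case True then show ?thesis using GA_nonneg[of x] by linarith
next
  case False
  then have lA: "l \<in> Aset x" using assms(2) by (simp add: Aset_def)
  have nn: "\<And>i. i \<in> Aset x - {l} \<Longrightarrow> 0 \<le> i" by (simp add: Aset_def)
  show ?thesis
    by (rule member_le_sum[OF lA nn finite_Aset[OF assms(1)]])
qed

lemma swap_in_Bset:
  assumes x: "x \<in> Bset" shows "swap_spins x k l \<in> Bset"
proof -
  obtain a b where ab: "\<And>j. j < a \<Longrightarrow> x j = -1" "\<And>j. j > b \<Longrightarrow> x j = 1"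
    using Bset_tails[OF x] by blast
  have sp: "swap_spins x k l \<in> spin_configs"
    using x by (auto simp: swap_spins_def Bset_def spin_configs_def)
  define a' where "a' = min a (min k l)"
  define b' where "b' = max b (max k l)"
  have "\<forall>i::nat. i \<ge> 1 \<longrightarrow> swap_spins x k l (a' - int i) = -1 \<and> swap_spins x k l (b' + int i) = 1"
  proof (intro allI impI)
    fix i :: nat assume i: "i \<ge> 1"
    have 1: "a' - int i < a" "a' - int i \<noteq> k" "a' - int i \<noteq> l" using i unfolding a'_def by linarith+
    have 2: "b' + int i > b" "b' + int i \<noteq> k" "b' + int i \<noteq> l" using i unfolding b'_def by linarith+
    show "swap_spins x k l (a' - int i) = -1 \<and> swap_spins x k l (b' + int i) = 1"
      unfolding swap_spins_def using 1 2 ab(1)[OF 1(1)] ab(2)[OF 2(1)] by simp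
  qed
  then show ?thesis using sp unfolding Bset_def by blast
qed

lemma swap_basic:
  assumes "x k = 1" "x l = -1"
  shows "k \<noteq> l" "swap_spins x k l k = -1" "swap_spins x k l l = 1"
    "swap_spins (swap_spins x k l) l k = x"
    "\<And>i. i \<noteq> k \<Longrightarrow> i \<noteq> l \<Longrightarrow> swap_spins x k l i = x i"
  using assms by (auto simp: swap_spins_def fun_eq_iff)

lemma swap_counts:
  assumes x: "x \<in> Bset" and v: "x k = 1" "x l = -1"
  shows "Ncount (swap_spins x k l) = Ncount x \<and> Gi (swap_spins x k l) = Gi x + k - l"
proof -
  define y where "y = swap_spins x k l"
  have kl: "k \<noteq> l" using v by auto
  have fA: "finite (Aset x)" and fB: "finite (Bs x)" using finite_Aset[OF x] finite_Bs[OF x] by auto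
  have yk: "y k = -1" and yl: "y l = 1" and yo: "\<And>i. i \<noteq> k \<Longrightarrow> i \<noteq> l \<Longrightarrow> y i = x i"
    using kl by (simp_all add: y_def swap_spins_def)
  have memA: "i \<in> Aset y \<longleftrightarrow> (if i = k then k \<ge> 1 else if i = l then False else i \<in> Aset x)" for i
    using yk yl yo[of i] kl by (auto simp: Aset_def)
  have memB: "i \<in> Bs y \<longleftrightarrow> (if i = k then False else if i = l then l \<le> 0 else i \<in> Bs x)" for i
    using yk yl yo[of i] kl by (auto simp: Bs_def)
  have kA: "k \<notin> Aset x" and kB: "k \<in> Bs x \<longleftrightarrow> k \<le> 0" using v by (auto simp: Aset_def Bs_def)
  have lA: "l \<in> Aset x \<longleftrightarrow> l \<ge> 1" and lB: "l \<notin> Bs x" using v by (auto simp: Aset_def Bs_def)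
  consider "k \<ge> 1" "l \<ge> 1" | "k \<ge> 1" "l \<le> 0" | "k \<le> 0" "l \<ge> 1" | "k \<le> 0" "l \<le> 0" by linarith
  then show ?thesis
  proof cases
    case 1
    have A: "Aset y = insert k (Aset x - {l})" using 1 kl lA lB kA kB by (auto simp: memA split: if_splits)
    have B: "Bs y = Bs x" using 1 kl lA lB kA kB by (auto simp: memB split: if_splits)
    have lA': "l \<in> Aset x" using lA 1 by simp
    have c0: "Suc (card (Aset x - {l})) = card (Aset x)" by (rule card_Suc_Diff1[OF fA lA'])
    have c: "card (Aset y) = card (Aset x)"
      unfolding A using fA kA c0 by simp
    have s0: "(\<Sum>i\<in>Aset x. i) = l + (\<Sum>i\<in>Aset x - {l}. i)" by (rule sum.remove[OF fA lA'])
    have s: "(\<Sum>i\<in>Aset y. i) = (\<Sum>i\<in>Aset x. i) + k - l"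
      unfolding A using fA kA s0 by simp
    show ?thesis using c s B unfolding y_def[symmetric] Ncount_alt Gi_def by simp
  next
    case 2
    have A: "Aset y = insert k (Aset x)" using 2 kl lA lB kA kB by (auto simp: memA split: if_splits)
    have B: "Bs y = insert l (Bs x)" using 2 kl lA lB kA kB by (auto simp: memB split: if_splits)
    show ?thesis unfolding y_def[symmetric] Ncount_alt Gi_def A B using fA fB kA lB by simp
  next
    case 3
    have A: "Aset y = Aset x - {l}" using 3 kl lA lB kA kB by (auto simp: memA split: if_splits)
    have B: "Bs y = Bs x - {k}" using 3 kl lA lB kA kB by (auto simp: memB split: if_splits)
    have lA': "l \<in> Aset x" using lA 3 by simp
    have kB': "k \<in> Bs x" using kB 3 by simp
    have c1: "Suc (card (Aset x - {l})) = card (Aset x)" by (rule card_Suc_Diff1[OF fA lA'])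
    have c2: "Suc (card (Bs x - {k})) = card (Bs x)" by (rule card_Suc_Diff1[OF fB kB'])
    have s1: "(\<Sum>i\<in>Aset x. i) = l + (\<Sum>i\<in>Aset x - {l}. i)" by (rule sum.remove[OF fA lA'])
    have s2: "(\<Sum>i\<in>Bs x. -i) = -k + (\<Sum>i\<in>Bs x - {k}. -i)" by (rule sum.remove[OF fB kB'])
    show ?thesis unfolding y_def[symmetric] Ncount_alt Gi_def A B
      using c1 c2 s1 s2 by linarith
  next
    case 4
    have A: "Aset y = Aset x" using 4 kl lA lB kA kB by (auto simp: memA split: if_splits)
    have B: "Bs y = insert l (Bs x - {k})" using 4 kl lA lB kA kB by (auto simp: memB split: if_splits)
    have kB': "k \<in> Bs x" using kB 4 by simp
    have c0: "Suc (card (Bs x - {k})) = card (Bs x)" by (rule card_Suc_Diff1[OF fB kB'])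
    have c: "card (Bs y) = card (Bs x)"
      unfolding B using fB lB c0 by simp
    have s0: "(\<Sum>i\<in>Bs x. -i) = -k + (\<Sum>i\<in>Bs x - {k}. -i)" by (rule sum.remove[OF fB kB'])
    have s: "(\<Sum>i\<in>Bs y. -i) = (\<Sum>i\<in>Bs x. -i) + k - l"
      unfolding B using fB lB s0 by simp
    show ?thesis using c s A unfolding y_def[symmetric] Ncount_alt Gi_def by simp
  qed
qed

lemma f_c_alt:
  assumes x: "x \<in> Bset"
  shows "f_c c x = 2 * real_of_int (Gi x) - 2 * c * real_of_int (Ncount x)"
proof -
  have fA: "finite (Aset x)" and fB: "finite (Bs x)" using finite_Aset[OF x] finite_Bs[OF x] by auto
  have 1: "(\<Sum>\<^sub>\<infinity>i\<in>{1..}. (real_of_int i - c) * (if x i = -1 then 1 else 0)) = (\<Sum>i\<in>Aset x. (real_of_int i - c))"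
  proof -
    have "(\<Sum>\<^sub>\<infinity>i\<in>{1..}. (real_of_int i - c) * (if x i = -1 then 1 else 0)) = (\<Sum>\<^sub>\<infinity>i\<in>Aset x. (real_of_int i - c))"
      by (rule infsum_cong_neutral) (auto simp: Aset_def)
    then show ?thesis using fA by simp
  qed
  have 2: "(\<Sum>\<^sub>\<infinity>i\<in>{..0}. (real_of_int i - c) * (if x i = 1 then 1 else 0)) = (\<Sum>i\<in>Bs x. (real_of_int i - c))"
  proof -
    have "(\<Sum>\<^sub>\<infinity>i\<in>{..0}. (real_of_int i - c) * (if x i = 1 then 1 else 0)) = (\<Sum>\<^sub>\<infinity>i\<in>Bs x. (real_of_int i - c))"
      by (rule infsum_cong_neutral) (auto simp: Bs_def)
    then show ?thesis using fB by simp
  qed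
  show ?thesis unfolding f_c_def 1 2 Gi_def Ncount_alt
    by (simp add: sum_subtractf sum_negf algebra_simps)
qed

definition indic :: "(int \<Rightarrow> int) \<Rightarrow> int \<Rightarrow> int \<Rightarrow> real" where
  "indic \<sigma> i j = (if \<sigma> i \<noteq> \<sigma> j then 1 else 0)"

definition hsum :: "(int \<Rightarrow> int \<Rightarrow> real) \<Rightarrow> (int \<Rightarrow> int) \<Rightarrow> int \<Rightarrow> int \<Rightarrow> real" where
  "hsum J \<sigma> k l = (\<Sum>\<^sub>\<infinity>i\<in>UNIV - {l, k}.
        J i k * real_of_int (\<sigma> k * \<sigma> i) + J i l * real_of_int (\<sigma> l * \<sigma> i))"

lemma move_rate_hsum:
  "move_rate J \<beta> q \<sigma> k l = (1/2) * q powr (real_of_int (k - l)) * (1 - tanh ((\<beta> / 2) * hsum J \<sigma> k l))"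
  unfolding move_rate_def hsum_def by simp

lemma ham_alt: "hamiltonian J \<sigma> = (1/2) * infsum (\<lambda>(i,j). J i j * indic \<sigma> i j) (UNIV \<times> UNIV)"
  unfolding hamiltonian_def indic_def by simp

lemma ham_parts:
  assumes "(\<lambda>(i,j). J i j * indic \<sigma> i j) summable_on (UNIV \<times> UNIV)"
  shows "\<And>i. (\<lambda>j. J i j * indic \<sigma> i j) summable_on UNIV"
    and "(\<lambda>i. \<Sum>\<^sub>\<infinity>j. J i j * indic \<sigma> i j) summable_on UNIV"
    and "hamiltonian J \<sigma> = (1/2) * (\<Sum>\<^sub>\<infinity>i. \<Sum>\<^sub>\<infinity>j. J i j * indic \<sigma> i j)"
proof -
  show "\<And>i. (\<lambda>j. J i j * indic \<sigma> i j) summable_on UNIV"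
    using summable_on_SigmaD1[of "\<lambda>i j. J i j * indic \<sigma> i j" UNIV "\<lambda>_. UNIV"] assms by auto
  show "(\<lambda>i. \<Sum>\<^sub>\<infinity>j. J i j * indic \<sigma> i j) summable_on UNIV"
    using summable_on_Sigma_banach[of "\<lambda>i j. J i j * indic \<sigma> i j" UNIV "\<lambda>_. UNIV"] assms by auto
  show "hamiltonian J \<sigma> = (1/2) * (\<Sum>\<^sub>\<infinity>i. \<Sum>\<^sub>\<infinity>j. J i j * indic \<sigma> i j)"
    unfolding ham_alt using infsum_Sigma'_banach[of "\<lambda>i j. J i j * indic \<sigma> i j" UNIV "\<lambda>_. UNIV"] assms by auto
qed

lemma ham_diff:
  assumes Jsym: "\<forall>i j. J i j = J j i"
    and x: "x \<in> Bset" and v: "x k = 1" "x l = -1"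
    and sx: "(\<lambda>(i,j). J i j * indic x i j) summable_on (UNIV \<times> UNIV)"
    and sy: "(\<lambda>(i,j). J i j * indic (swap_spins x k l) i j) summable_on (UNIV \<times> UNIV)"
  shows "hamiltonian J (swap_spins x k l) = hamiltonian J x + hsum J x k l"
proof -
  define y where "y = swap_spins x k l"
  have kl: "k \<noteq> l" using v by auto
  have yk: "y k = -1" and yl: "y l = 1" and yo: "\<And>i. i \<noteq> k \<Longrightarrow> i \<noteq> l \<Longrightarrow> y i = x i"
    using kl by (simp_all add: y_def swap_spins_def)
  note px = ham_parts[OF sx] and py = ham_parts[OF sy[folded y_def]]
  define Ex where "Ex i = (\<Sum>\<^sub>\<infinity>j. J i j * indic x i j)" for i
  define Ey where "Ey i = (\<Sum>\<^sub>\<infinity>j. J i j * indic y i j)" for i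
  define D where "D i j = J i j * (indic y i j - indic x i j)" for i j
  define T where "T i = J i k * real_of_int (x k * x i) + J i l * real_of_int (x l * x i)" for i
  define hs where "hs = (\<Sum>\<^sub>\<infinity>i\<in>UNIV - {l,k}. T i)"
  have hs_eq: "hsum J x k l = hs" unfolding hsum_def hs_def T_def by simp
  have Drow: "D i summable_on UNIV" for i
    unfolding D_def right_diff_distrib using summable_on_diffR[OF py(1) px(1)] by simp
  have dE: "Ey i - Ex i = (\<Sum>\<^sub>\<infinity>j. D i j)" for i
    unfolding Ex_def Ey_def D_def right_diff_distrib using infsum_diffR[OF py(1) px(1)] by simp
  have dE_sum: "(\<lambda>i. Ey i - Ex i) summable_on UNIV"
    unfolding Ex_def Ey_def using summable_on_diffR[OF py(2) px(2)] by simp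
  have Dik: "D i k = J i k * real_of_int (x k * x i)" if "i \<noteq> k" "i \<noteq> l" for i
    using spin_cases[OF x, of i] yo[OF that] yk v unfolding D_def indic_def by (elim disjE) simp_all
  have Dil: "D i l = J i l * real_of_int (x l * x i)" if "i \<noteq> k" "i \<noteq> l" for i
    using spin_cases[OF x, of i] yo[OF that] yl v unfolding D_def indic_def by (elim disjE) simp_all
  have Dkj: "D k j = J j k * real_of_int (x k * x j)" if "j \<noteq> k" "j \<noteq> l" for j
  proof -
    have "D k j = J j k * (indic y j k - indic x j k)"
      unfolding D_def indic_def using Jsym[rule_format, of k j] by (simp add: eq_commute)
    then show ?thesis using Dik[OF that] unfolding D_def by simp
  qed
  have Dlj: "D l j = J j l * real_of_int (x l * x j)" if "j \<noteq> k" "j \<noteq> l" for j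
  proof -
    have "D l j = J j l * (indic y j l - indic x j l)"
      unfolding D_def indic_def using Jsym[rule_format, of l j] by (simp add: eq_commute)
    then show ?thesis using Dil[OF that] unfolding D_def by simp
  qed
  have Dkk: "D k k = 0" "D k l = 0" "D l k = 0" "D l l = 0"
    using yk yl v unfolding D_def indic_def by simp_all
  have claim1: "Ey i - Ex i = T i" if "i \<noteq> k" "i \<noteq> l" for i
  proof -
    have "(\<Sum>\<^sub>\<infinity>j. D i j) = (\<Sum>\<^sub>\<infinity>j\<in>{k,l}. D i j)"
      by (rule infsum_cong_neutral) (use yo that in \<open>simp_all add: D_def indic_def\<close>)
    also have "\<dots> = D i k + D i l" using kl by simp
    finally show ?thesis using dE[of i] Dik[OF that] Dil[OF that] unfolding T_def by simp
  qed
  have sk: "D k summable_on (UNIV - {l,k})" using summable_on_subset_banach[OF Drow[of k]] by blast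
  have sl: "D l summable_on (UNIV - {l,k})" using summable_on_subset_banach[OF Drow[of l]] by blast
  have dEk: "Ey k - Ex k = (\<Sum>\<^sub>\<infinity>j\<in>UNIV - {l,k}. D k j)"
    unfolding dE by (rule infsum_cong_neutral) (use Dkk in auto)
  have dEl: "Ey l - Ex l = (\<Sum>\<^sub>\<infinity>j\<in>UNIV - {l,k}. D l j)"
    unfolding dE by (rule infsum_cong_neutral) (use Dkk in auto)
  have claim2: "(Ey k - Ex k) + (Ey l - Ex l) = hs"
  proof -
    have "(Ey k - Ex k) + (Ey l - Ex l) = (\<Sum>\<^sub>\<infinity>j\<in>UNIV - {l,k}. D k j + D l j)"
      unfolding dEk dEl by (rule infsum_add[symmetric, OF sk sl])
    also have "\<dots> = hs" unfolding hs_def T_def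
      by (rule infsum_cong) (use Dkj Dlj in auto)
    finally show ?thesis .
  qed
  have claim3: "(\<Sum>\<^sub>\<infinity>i\<in>UNIV - {l,k}. Ey i - Ex i) = hs"
    unfolding hs_def by (rule infsum_cong) (use claim1 in auto)
  have tot: "(\<Sum>\<^sub>\<infinity>i. Ey i - Ex i) = hs + hs"
  proof -
    have U: "(UNIV::int set) = {l,k} \<union> (UNIV - {l,k})" by auto
    have "(\<Sum>\<^sub>\<infinity>i. Ey i - Ex i) = (\<Sum>\<^sub>\<infinity>i\<in>{l,k}. Ey i - Ex i) + (\<Sum>\<^sub>\<infinity>i\<in>UNIV - {l,k}. Ey i - Ex i)"
      by (subst U, rule infsum_Un_disjoint)
         (use summable_on_subset_banach[OF dE_sum] in auto)
    also have "\<dots> = hs + hs" using claim2 claim3 kl by simp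
    finally show ?thesis .
  qed
  have "hamiltonian J y - hamiltonian J x = (1/2) * ((\<Sum>\<^sub>\<infinity>i. Ey i) - (\<Sum>\<^sub>\<infinity>i. Ex i))"
    using px(3) py(3) unfolding Ex_def Ey_def y_def by (simp add: right_diff_distrib)
  also have "\<dots> = (1/2) * (\<Sum>\<^sub>\<infinity>i. Ey i - Ex i)"
    using infsum_diffR[OF py(2) px(2)] unfolding Ex_def Ey_def by simp
  also have "\<dots> = hs" using tot by simp
  finally show ?thesis using hs_eq unfolding y_def by simp
qed

lemma hsum_swap:
  assumes v: "x k = 1" "x l = -1"
  shows "hsum J (swap_spins x k l) l k = - hsum J x k l"
proof -
  define y where "y = swap_spins x k l"
  have kl: "k \<noteq> l" using v by auto
  have yk: "y k = -1" and yl: "y l = 1" and yo: "\<And>i. i \<noteq> k \<Longrightarrow> i \<noteq> l \<Longrightarrow> y i = x i"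
    using kl by (simp_all add: y_def swap_spins_def)
  define T where "T i = J i k * real_of_int (x k * x i) + J i l * real_of_int (x l * x i)" for i
  have "hsum J y l k = (\<Sum>\<^sub>\<infinity>i\<in>UNIV - {l, k}. - T i)"
    unfolding hsum_def
    by (subst insert_commute, rule infsum_cong) (use yk yl yo v in \<open>auto simp: T_def\<close>)
  also have "\<dots> = - (\<Sum>\<^sub>\<infinity>i\<in>UNIV - {l, k}. T i)" by (rule infsum_uminus)
  also have "(\<Sum>\<^sub>\<infinity>i\<in>UNIV - {l, k}. T i) = hsum J x k l" unfolding hsum_def T_def by simp
  finally show ?thesis unfolding y_def .
qed

lemma conc_rows:
  assumes "concentrated_on_B J \<beta> q c" "\<sigma> \<in> Bset"
  shows "(\<lambda>(i,j). J i j * indic \<sigma> i j) summable_on (UNIV \<times> UNIV)"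
  using assms unfolding concentrated_on_B_def indic_def by simp

lemma gw_swap:
  assumes Jsym: "\<forall>i j. J i j = J j i" and conc: "concentrated_on_B J \<beta> q c"
    and x: "x \<in> Bset" and v: "x k = 1" "x l = -1" and q: "q > 0"
  shows "gibbs_weight J \<beta> q c (swap_spins x k l) =
         gibbs_weight J \<beta> q c x * exp (- \<beta> * hsum J x k l) * q powr (2 * real_of_int (k - l))"
proof -
  define y where "y = swap_spins x k l"
  have y: "y \<in> Bset" unfolding y_def by (rule swap_in_Bset[OF x])
  have H: "hamiltonian J y = hamiltonian J x + hsum J x k l"
    unfolding y_def by (rule ham_diff[OF Jsym x v conc_rows[OF conc x] conc_rows[OF conc swap_in_Bset[OF x]]])
  have sc: "Ncount y = Ncount x" "Gi y = Gi x + k - l" using swap_counts[OF x v] unfolding y_def by auto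
  have F: "f_c c y = f_c c x + 2 * real_of_int (k - l)"
    unfolding f_c_alt[OF x] f_c_alt[OF y] sc by simp
  have e: "exp (- \<beta> * (hamiltonian J x + hsum J x k l)) = exp (- \<beta> * hamiltonian J x) * exp (- \<beta> * hsum J x k l)"
    by (simp add: exp_add[symmetric] algebra_simps)
  have p: "q powr (f_c c x + 2 * real_of_int (k - l)) = q powr (f_c c x) * q powr (2 * real_of_int (k - l))"
    by (rule powr_add)
  show ?thesis unfolding y_def[symmetric] gibbs_weight_def H F e p by (simp add: algebra_simps)
qed

lemma tanh_identity: "1 - tanh (t::real) = exp (- 2 * t) * (1 + tanh t)"
proof -
  define e where "e = exp (- 2 * t)"
  have e: "e > 0" unfolding e_def by simp
  show ?thesis unfolding tanh_real_altdef e_def[symmetric] using e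
    by (simp add: field_simps)
qed

lemma db_move:
  assumes Jsym: "\<forall>i j. J i j = J j i" and conc: "concentrated_on_B J \<beta> q c"
    and x: "x \<in> Bset" and v: "x k = 1" "x l = -1" and q: "q > 0"
  shows "gibbs_weight J \<beta> q c x * move_rate J \<beta> q x k l =
         gibbs_weight J \<beta> q c (swap_spins x k l) * move_rate J \<beta> q (swap_spins x k l) l k"
proof -
  define h where "h = hsum J x k l"
  define t where "t = \<beta> / 2 * h"
  have hs: "hsum J (swap_spins x k l) l k = - h" unfolding h_def by (rule hsum_swap[of x k l, OF v])
  have e: "exp (- \<beta> * h) = exp (- 2 * t)" unfolding t_def by simp
  have p: "q powr (2 * real_of_int (k - l)) * q powr (real_of_int (l - k)) = q powr (real_of_int (k - l))"
    using q by (simp add: powr_add[symmetric] algebra_simps)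
  have "gibbs_weight J \<beta> q c (swap_spins x k l) * move_rate J \<beta> q (swap_spins x k l) l k
     = gibbs_weight J \<beta> q c x * (1/2) * (q powr (2 * real_of_int (k - l)) * q powr (real_of_int (l - k)))
       * (exp (- 2 * t) * (1 + tanh t))"
    unfolding gw_swap[OF Jsym conc x v q] move_rate_hsum hs h_def[symmetric] e
    by (simp add: t_def algebra_simps)
  also have "\<dots> = gibbs_weight J \<beta> q c x * move_rate J \<beta> q x k l"
    unfolding p tanh_identity[symmetric] move_rate_hsum h_def[symmetric] t_def by simp
  finally show ?thesis by simp
qed

lemma swap_unique:
  assumes "x k = 1" "x l = -1" "x k' = 1" "x l' = -1" "swap_spins x k' l' = swap_spins x k l"
  shows "k' = k \<and> l' = l"
proof -
  have kl: "k \<noteq> l" "k' \<noteq> l'" using assms by auto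
  have 1: "swap_spins x k' l' k = -1" using assms(5) kl by (simp add: swap_spins_def)
  have 2: "swap_spins x k' l' l = 1" using assms(5) kl by (simp add: swap_spins_def)
  have "k = k'"
  proof (rule ccontr)
    assume "k \<noteq> k'"
    then show False using 1 assms(1) kl by (cases "k = l'") (simp_all add: swap_spins_def)
  qed
  moreover have "l = l'"
  proof (rule ccontr)
    assume "l \<noteq> l'"
    then show False using 2 assms(2) kl by (cases "l = k'") (simp_all add: swap_spins_def)
  qed
  ultimately show ?thesis by simp
qed

lemma kr_swap:
  assumes v: "x k = 1" "x l = -1"
  shows "kawasaki_rate J \<beta> q x (swap_spins x k l) = move_rate J \<beta> q x k l"
proof -
  have ex: "\<exists>k' l'. x k' = 1 \<and> x l' = -1 \<and> swap_spins x k l = swap_spins x k' l'" using v by blast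
  have "(SOME (k', l'). x k' = 1 \<and> x l' = -1 \<and> swap_spins x k l = swap_spins x k' l') = (k, l)"
  proof (rule some_equality)
    show "case (k, l) of (k', l') \<Rightarrow> x k' = 1 \<and> x l' = -1 \<and> swap_spins x k l = swap_spins x k' l'"
      using v by simp
  next
    fix p assume "case p of (k', l') \<Rightarrow> x k' = 1 \<and> x l' = -1 \<and> swap_spins x k l = swap_spins x k' l'"
    then show "p = (k, l)" using swap_unique[of x k l, OF v] by (cases p) auto
  qed
  then show ?thesis unfolding kawasaki_rate_def using ex by simp
qed

lemma kr_zero:
  assumes "\<not> (\<exists>k l. x k = 1 \<and> x l = -1 \<and> y = swap_spins x k l)"
  shows "kawasaki_rate J \<beta> q x y = 0"
  unfolding kawasaki_rate_def by (simp only: if_not_P[OF assms])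

lemma db_kr:
  assumes Jsym: "\<forall>i j. J i j = J j i" and conc: "concentrated_on_B J \<beta> q c"
    and x: "x \<in> Bset" and q: "q > 0"
  shows "gibbs_weight J \<beta> q c x * kawasaki_rate J \<beta> q x y = gibbs_weight J \<beta> q c y * kawasaki_rate J \<beta> q y x"
proof (cases "\<exists>k l. x k = 1 \<and> x l = -1 \<and> y = swap_spins x k l")
  case True
  then obtain k l where v: "x k = 1" "x l = -1" and y: "y = swap_spins x k l" by blast
  have yv: "y l = 1" "y k = -1" and yx: "x = swap_spins y l k" using swap_basic[of x k l, OF v] y by auto
  have r1: "kawasaki_rate J \<beta> q x y = move_rate J \<beta> q x k l" unfolding y by (rule kr_swap[of x k l, OF v])
  have r2: "kawasaki_rate J \<beta> q y x = move_rate J \<beta> q y l k"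
    using kr_swap[of y l k J \<beta> q, OF yv] yx by simp
  show ?thesis unfolding r1 r2 using db_move[OF Jsym conc x v q] unfolding y[symmetric] .
next
  case False
  have F2: "\<not> (\<exists>k l. y k = 1 \<and> y l = -1 \<and> x = swap_spins y k l)"
  proof
    assume "\<exists>k l. y k = 1 \<and> y l = -1 \<and> x = swap_spins y k l"
    then obtain k l where v: "y k = 1" "y l = -1" and xy: "x = swap_spins y k l" by blast
    have "x l = 1" "x k = -1" "y = swap_spins x l k" using swap_basic[of y k l, OF v] xy by auto
    then show False using False by blast
  qed
  show ?thesis using kr_zero[OF False] kr_zero[OF F2] by simp
qed

lemma move_rate_bounds:
  assumes "q > 0"
  shows "move_rate J \<beta> q x k l > 0" "move_rate J \<beta> q x k l \<le> q powr (real_of_int (k - l))"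
proof -
  define t where "t = (\<beta> / 2) * hsum J x k l"
  have t1: "tanh t < 1" "tanh t > -1" using tanh_real_bounds[of t] by auto
  have qp: "q powr (real_of_int (k - l)) > 0" using assms by simp
  show "move_rate J \<beta> q x k l > 0" unfolding move_rate_hsum t_def[symmetric] using t1 qp by simp
  show "move_rate J \<beta> q x k l \<le> q powr (real_of_int (k - l))"
    unfolding move_rate_hsum t_def[symmetric] using t1 qp by (simp add: mult_le_cancel_left1)
qed

lemma geo_nat:
  fixes q :: real
  assumes "finite N" "0 \<le> q" "q < 1"
  shows "(\<Sum>n\<in>N. q ^ n) \<le> 1 / (1 - q)"
proof -
  obtain m where m: "N \<subseteq> {..<m}" using finite_nat_bounded[OF assms(1)] by blast
  have "(\<Sum>n\<in>N. q ^ n) \<le> (\<Sum>n<m. q ^ n)"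
    by (rule sum_mono2) (use m assms in auto)
  also have "\<dots> = (1 - q ^ m) / (1 - q)" using sum_gp_strict[of q m] assms by simp
  also have "\<dots> \<le> 1 / (1 - q)" using assms by (simp add: divide_right_mono)
  finally show ?thesis .
qed

lemma geo_bound:
  fixes K :: "int set" and q :: real
  assumes "finite K" "\<forall>k\<in>K. k \<ge> a" "0 < q" "q < 1"
  shows "(\<Sum>k\<in>K. q powr real_of_int k) \<le> q powr real_of_int a / (1 - q)"
proof -
  have eq: "q powr real_of_int k = q powr real_of_int a * q ^ nat (k - a)" if "k \<in> K" for k
  proof -
    have "q powr real_of_int k = q powr (real_of_int a + real (nat (k - a)))"
      using assms(2) that by simp
    also have "\<dots> = q powr real_of_int a * q ^ nat (k - a)"
      using assms(3) by (simp add: powr_add powr_realpow)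
    finally show ?thesis .
  qed
  have inj: "inj_on (\<lambda>k. nat (k - a)) K"
  proof (rule inj_onI)
    fix u v assume "u \<in> K" "v \<in> K" "nat (u - a) = nat (v - a)"
    moreover have "u \<ge> a" "v \<ge> a" using assms(2) \<open>u \<in> K\<close> \<open>v \<in> K\<close> by auto
    ultimately show "u = v" by (simp add: eq_nat_nat_iff)
  qed
  have "(\<Sum>k\<in>K. q powr real_of_int k) = q powr real_of_int a * (\<Sum>k\<in>K. q ^ nat (k - a))"
    by (simp add: eq sum_distrib_left)
  also have "(\<Sum>k\<in>K. q ^ nat (k - a)) = (\<Sum>n\<in>(\<lambda>k. nat (k - a)) ` K. q ^ n)"
    by (simp add: sum.reindex[OF inj])
  also have "q powr real_of_int a * \<dots> \<le> q powr real_of_int a * (1 / (1 - q))"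
    by (rule mult_left_mono[OF geo_nat]) (use assms in auto)
  finally show ?thesis by simp
qed

lemma rate_sum_bound:
  assumes x: "x \<in> Bset" and q: "0 < q" "q < 1" and Y: "finite Y"
  shows "(\<Sum>y\<in>Y. kawasaki_rate J \<beta> q x y) \<le> q powr (- real_of_int (Gi x)) / (1 - q)^2"
proof -
  define sw where "sw = (\<lambda>p. swap_spins x (fst p) (snd p))"
  define P where "P = {p. x (fst p) = 1 \<and> x (snd p) = -1 \<and> sw p \<in> Y}"
  define Y' where "Y' = sw ` P"
  have injP: "inj_on sw P"
  proof (rule inj_onI)
    fix p p' assume pp: "p \<in> P" "p' \<in> P" "sw p = sw p'"
    obtain k l k' l' where p: "p = (k,l)" and p': "p' = (k',l')" by (cases p, cases p') auto
    have v: "x k = 1" "x l = -1" "x k' = 1" "x l' = -1" using pp(1,2) unfolding p p' P_def by auto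
    have e: "swap_spins x k' l' = swap_spins x k l" using pp(3) unfolding p p' sw_def by simp
    show "p = p'" using swap_unique[OF v e] unfolding p p' by simp
  qed
  have Y'Y: "Y' \<subseteq> Y" unfolding Y'_def P_def by auto
  have finP: "finite P" using finite_imageD[of sw P] finite_subset[OF Y'Y Y] injP unfolding Y'_def by blast
  have "(\<Sum>y\<in>Y. kawasaki_rate J \<beta> q x y) = (\<Sum>y\<in>Y'. kawasaki_rate J \<beta> q x y)"
  proof (rule sum.mono_neutral_right[OF Y Y'Y])
    show "\<forall>i\<in>Y - Y'. kawasaki_rate J \<beta> q x i = 0"
    proof
      fix y assume y: "y \<in> Y - Y'"
      have "\<not> (\<exists>k l. x k = 1 \<and> x l = -1 \<and> y = swap_spins x k l)"
      proof
        assume "\<exists>k l. x k = 1 \<and> x l = -1 \<and> y = swap_spins x k l"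
        then obtain k l where "x k = 1" "x l = -1" "y = swap_spins x k l" by blast
        then have "(k,l) \<in> P" "y = sw (k,l)" using y unfolding P_def sw_def by auto
        then show False using y unfolding Y'_def by auto
      qed
      then show "kawasaki_rate J \<beta> q x y = 0" by (rule kr_zero)
    qed
  qed
  also have "\<dots> = (\<Sum>p\<in>P. kawasaki_rate J \<beta> q x (sw p))"
    unfolding Y'_def by (rule sum.reindex[OF injP, unfolded comp_def])
  also have "\<dots> = (\<Sum>p\<in>P. move_rate J \<beta> q x (fst p) (snd p))"
    by (rule sum.cong) (auto simp: P_def sw_def intro!: kr_swap)
  also have "\<dots> \<le> (\<Sum>p\<in>P. q powr real_of_int (fst p) * q powr real_of_int (- snd p))"
  proof (rule sum_mono)
    fix p assume "p \<in> P"
    show "move_rate J \<beta> q x (fst p) (snd p) \<le> q powr real_of_int (fst p) * q powr real_of_int (- snd p)"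
      using move_rate_bounds(2)[OF q(1), of J \<beta> x "fst p" "snd p"]
      by (simp add: powr_add[symmetric])
  qed
  also have "\<dots> \<le> (\<Sum>p\<in>fst ` P \<times> snd ` P. q powr real_of_int (fst p) * q powr real_of_int (- snd p))"
    by (rule sum_mono2) (use finP subset_fst_snd[of P] in auto)
  also have "\<dots> = (\<Sum>k\<in>fst ` P. q powr real_of_int k) * (\<Sum>l\<in>snd ` P. q powr real_of_int (- l))"
    by (simp add: sum_product sum.cartesian_product case_prod_unfold)
  also have "\<dots> \<le> (q powr real_of_int (- (\<Sum>i\<in>Bs x. - i)) / (1 - q)) * (q powr real_of_int (- (\<Sum>i\<in>Aset x. i)) / (1 - q))"
  proof (rule mult_mono)
    show "(\<Sum>k\<in>fst ` P. q powr real_of_int k) \<le> q powr real_of_int (- (\<Sum>i\<in>Bs x. - i)) / (1 - q)"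
      by (rule geo_bound) (use finP q plus_site_ge[OF x] in \<open>auto simp: P_def\<close>)
    have "(\<Sum>l\<in>snd ` P. q powr real_of_int (- l)) = (\<Sum>k\<in>uminus ` snd ` P. q powr real_of_int k)"
      by (simp add: sum.reindex inj_on_def)
    also have "\<dots> \<le> q powr real_of_int (- (\<Sum>i\<in>Aset x. i)) / (1 - q)"
      by (rule geo_bound) (use finP q minus_site_le[OF x] in \<open>auto simp: P_def\<close>)
    finally show "(\<Sum>l\<in>snd ` P. q powr real_of_int (- l)) \<le> q powr real_of_int (- (\<Sum>i\<in>Aset x. i)) / (1 - q)" .
  qed (use q in \<open>auto intro: sum_nonneg\<close>)
  also have "\<dots> = q powr (- real_of_int (Gi x)) / (1 - q)^2"
    unfolding Gi_def using q by (simp add: powr_add[symmetric] power2_eq_square algebra_simps)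
  finally show ?thesis .
qed

lemma family_bound:
  fixes e :: "'a \<Rightarrow> int" and q :: real
  assumes inj: "inj_on e I" and nn: "\<forall>i\<in>I. e i \<ge> 0" and fin: "finite FF"
    and FF: "\<forall>F\<in>FF. finite F \<and> F \<subseteq> I" and q: "0 < q" "q < 1"
  shows "(\<Sum>F\<in>FF. q powr real_of_int (\<Sum>i\<in>F. e i)) \<le> exp (1 / (1 - q))"
proof -
  define U where "U = \<Union>FF"
  have finU: "finite U" using fin FF unfolding U_def by auto
  have UI: "U \<subseteq> I" using FF unfolding U_def by auto
  have "(\<Sum>F\<in>FF. q powr real_of_int (\<Sum>i\<in>F. e i)) \<le> (\<Sum>F\<in>Pow U. q powr real_of_int (\<Sum>i\<in>F. e i))"
    by (rule sum_mono2) (use finU in \<open>auto simp: U_def\<close>)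
  also have "\<dots> = (\<Sum>F\<in>Pow U. (\<Prod>i\<in>F. q powr real_of_int (e i)))"
    using q by (intro sum.cong refl) (simp add: powr_sum)
  also have "\<dots> = (\<Prod>i\<in>U. q powr real_of_int (e i) + 1)"
    using prod_add[OF finU, of "\<lambda>i. q powr real_of_int (e i)" "\<lambda>_. 1"] by simp
  also have "\<dots> \<le> (\<Prod>i\<in>U. exp (q powr real_of_int (e i)))"
    by (rule prod_mono) (auto simp: add.commute)
  also have "\<dots> = exp (\<Sum>i\<in>U. q powr real_of_int (e i))" by (simp add: exp_sum[OF finU])
  also have "(\<Sum>i\<in>U. q powr real_of_int (e i)) = (\<Sum>k\<in>e ` U. q powr real_of_int k)"
    using inj UI by (simp add: sum.reindex inj_on_subset)
  also have "exp \<dots> \<le> exp (q powr real_of_int 0 / (1 - q))"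
    by (subst exp_le_cancel_iff, rule geo_bound) (use finU q nn UI in auto)
  finally show ?thesis using q by simp
qed

lemma conf_inj: "inj_on (\<lambda>x. (Aset x, Bs x)) Bset"
proof (rule inj_onI)
  fix x y assume x: "x \<in> Bset" and y: "y \<in> Bset" and e: "(Aset x, Bs x) = (Aset y, Bs y)"
  show "x = y"
  proof
    fix i
    show "x i = y i"
    proof (cases "i \<ge> 1")
      case True
      have "x i = -1 \<longleftrightarrow> y i = -1" using e True unfolding Aset_def by (auto simp: set_eq_iff)
      then show ?thesis using spin_cases[OF x, of i] spin_cases[OF y, of i] by auto
    next
      case False
      have "x i = 1 \<longleftrightarrow> y i = 1" using e False unfolding Bs_def by (auto simp: set_eq_iff)
      then show ?thesis using spin_cases[OF x, of i] spin_cases[OF y, of i] by auto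
    qed
  qed
qed

lemma Gi_sum_bound:
  assumes X: "finite X" "X \<subseteq> Bset" and q: "0 < q" "q < 1"
  shows "(\<Sum>x\<in>X. q powr real_of_int (Gi x)) \<le> exp (1 / (1 - q)) * exp (1 / (1 - q))"
proof -
  define phi where "phi = (\<lambda>x. (Aset x, Bs x))"
  define g where "g = (\<lambda>p. q powr real_of_int (\<Sum>i\<in>fst p. i) * q powr real_of_int (\<Sum>i\<in>snd p. - i))"
  have injX: "inj_on phi X" using inj_on_subset[OF conf_inj X(2)] unfolding phi_def .
  have "(\<Sum>x\<in>X. q powr real_of_int (Gi x)) = (\<Sum>x\<in>X. g (phi x))"
    unfolding g_def phi_def Gi_def by (simp add: powr_add)
  also have "\<dots> = (\<Sum>p\<in>phi ` X. g p)" by (simp add: sum.reindex[OF injX])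
  also have "\<dots> \<le> (\<Sum>p\<in>(fst ` phi ` X) \<times> (snd ` phi ` X). g p)"
    by (rule sum_mono2) (use X subset_fst_snd[of "phi ` X"] in \<open>auto simp: g_def\<close>)
  also have "\<dots> = (\<Sum>F\<in>fst ` phi ` X. q powr real_of_int (\<Sum>i\<in>F. i)) * (\<Sum>G\<in>snd ` phi ` X. q powr real_of_int (\<Sum>i\<in>G. - i))"
    unfolding g_def by (simp add: sum_product sum.cartesian_product case_prod_unfold)
  also have "\<dots> \<le> exp (1 / (1 - q)) * exp (1 / (1 - q))"
  proof (rule mult_mono)
    show "(\<Sum>F\<in>fst ` phi ` X. q powr real_of_int (\<Sum>i\<in>F. i)) \<le> exp (1 / (1 - q))"
      by (rule family_bound[where I = "{1..}" and e = "\<lambda>i. i"])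
         (use X q finite_Aset in \<open>auto simp: phi_def, auto simp: Aset_def\<close>)
    show "(\<Sum>G\<in>snd ` phi ` X. q powr real_of_int (\<Sum>i\<in>G. - i)) \<le> exp (1 / (1 - q))"
      by (rule family_bound[where I = "{..0}" and e = "\<lambda>i. - i"])
         (use X q finite_Bs in \<open>auto simp: phi_def inj_on_def, auto simp: Bs_def\<close>)
  qed (auto intro: sum_nonneg)
  finally show ?thesis .
qed

lemma stepc_Bset: "stepc m \<in> Bset"
proof -
  have "stepc m \<in> spin_configs" by (auto simp: spin_configs_def stepc_def)
  moreover have "\<forall>i::nat. i \<ge> 1 \<longrightarrow> stepc m (m - int i) = -1 \<and> stepc m (m + int i) = 1"
    by (auto simp: stepc_def)
  ultimately show ?thesis unfolding Bset_def by blast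
qed

lemma Ncount_stepc: "Ncount (stepc m) = m"
proof -
  have A: "Aset (stepc m) = {1..m}" by (auto simp: Aset_def stepc_def)
  have B: "Bs (stepc m) = {m+1..0}" by (auto simp: Bs_def stepc_def)
  show ?thesis unfolding Ncount_alt A B by simp
qed

lemma monotone_is_step:
  assumes x: "x \<in> Bset" and mono: "\<And>k l. x k = 1 \<Longrightarrow> x l = -1 \<Longrightarrow> l < k"
  shows "\<exists>m. x = stepc m"
proof -
  obtain a b where ab: "\<And>j. j < a \<Longrightarrow> x j = -1" "\<And>j. j > b \<Longrightarrow> x j = 1"
    using Bset_tails[OF x] by blast
  define M where "M = {j. x j = -1} \<inter> {a - 1..b}"
  have finM: "finite M" unfolding M_def by simp
  have neM: "M \<noteq> {}"
  proof -
    have "x (a - 1) = -1" using ab(1) by simp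
    moreover have "a - 1 \<le> b"
    proof (rule ccontr)
      assume "\<not> a - 1 \<le> b"
      then have "x (a - 1) = 1" using ab(2) by simp
      then show False using \<open>x (a - 1) = -1\<close> by simp
    qed
    ultimately have "a - 1 \<in> M" unfolding M_def by simp
    then show ?thesis by blast
  qed
  define m where "m = Max M"
  have mM: "m \<in> M" unfolding m_def using finM neM by simp
  have xm: "x m = -1" using mM unfolding M_def by simp
  have "x = stepc m"
  proof
    fix j
    show "x j = stepc m j"
    proof (cases "j \<le> m")
      case True
      show ?thesis
      proof (cases "j = m")
        case True then show ?thesis using xm by (simp add: stepc_def)
      next
        case False
        then have "j < m" using \<open>j \<le> m\<close> by simp
        have "x j \<noteq> 1" using mono[of j m] xm \<open>j < m\<close> by auto
        then show ?thesis using spin_cases[OF x, of j] \<open>j \<le> m\<close> by (auto simp: stepc_def)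
      qed
    next
      case False
      have "x j \<noteq> -1"
      proof
        assume xj: "x j = -1"
        have "j \<le> b" using ab(2)[of j] xj by (cases "j > b") auto
        moreover have "j \<ge> a - 1" using mM False unfolding M_def by auto
        ultimately have "j \<in> M" using xj unfolding M_def by simp
        then have "j \<le> m" unfolding m_def using finM by simp
        then show False using False by simp
      qed
      then show ?thesis using spin_cases[OF x, of j] False by (auto simp: stepc_def)
    qed
  qed
  then show ?thesis by blast
qed

lemma connect_step:
  fixes u :: "(int \<Rightarrow> int) \<Rightarrow> real"
  assumes hyp: "\<And>y k l. y \<in> Bn n \<Longrightarrow> y k = 1 \<Longrightarrow> y l = -1 \<Longrightarrow> k < l \<Longrightarrow> u y = u (swap_spins y k l)"
  shows "x \<in> Bn n \<Longrightarrow> u x = u (stepc n)"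
proof -
  have "\<forall>x. nat (Gi x) = N \<longrightarrow> x \<in> Bn n \<longrightarrow> u x = u (stepc n)" for N
  proof (induction N rule: less_induct)
    case (less N)
    show ?case
    proof (intro allI impI)
      fix x assume GN: "nat (Gi x) = N" and xS: "x \<in> Bn n"
      have x: "x \<in> Bset" and Nx: "Ncount x = n" using xS by (auto simp: Bn_def)
      show "u x = u (stepc n)"
      proof (cases "\<exists>k l. x k = 1 \<and> x l = -1 \<and> k < l")
        case True
        then obtain k l where v: "x k = 1" "x l = -1" and kl: "k < l" by blast
        define y where "y = swap_spins x k l"
        have sc: "Ncount y = Ncount x" "Gi y = Gi x + k - l" using swap_counts[OF x v] unfolding y_def by auto
        have yS: "y \<in> Bn n" using swap_in_Bset[OF x] sc Nx unfolding y_def Bn_def by auto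
        have lt: "nat (Gi y) < N" using sc kl GN Gi_nonneg[of y] by linarith
        have "u y = u (stepc n)" using less.IH[OF lt] yS by blast
        moreover have "u x = u y" unfolding y_def by (rule hyp[OF xS v kl])
        ultimately show ?thesis by simp
      next
        case False
        then have "\<And>k l. x k = 1 \<Longrightarrow> x l = -1 \<Longrightarrow> l < k"
          by (metis linorder_neqE_linordered_idom minus_equation_iff one_neq_neg_one)
        then obtain m where m: "x = stepc m" using monotone_is_step[OF x] by blast
        then have "m = n" using Nx Ncount_stepc by simp
        then show ?thesis using m by simp
      qed
    qed
  qed
  then show "x \<in> Bn n \<Longrightarrow> u x = u (stepc n)" by blast
qed

lemma kr_nonneg:
  assumes "q > 0"
  shows "kawasaki_rate J \<beta> q x y \<ge> 0"
proof (cases "\<exists>k l. x k = 1 \<and> x l = -1 \<and> y = swap_spins x k l")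
  case True
  then obtain k l where v: "x k = 1" "x l = -1" and y: "y = swap_spins x k l" by blast
  show ?thesis unfolding y kr_swap[of x k l, OF v] using move_rate_bounds(1)[OF assms, of J \<beta> x k l] by simp
next
  case False
  then show ?thesis using kr_zero[OF False] by simp
qed

lemma kr_diag: "kawasaki_rate J \<beta> q x x = 0"
proof (rule kr_zero)
  show "\<not> (\<exists>k l. x k = 1 \<and> x l = -1 \<and> x = swap_spins x k l)"
  proof
    assume "\<exists>k l. x k = 1 \<and> x l = -1 \<and> x = swap_spins x k l"
    then obtain k l where v: "x k = 1" "x l = -1" and e: "x = swap_spins x k l" by blast
    have "swap_spins x k l k = -1" using swap_basic[of x k l, OF v] by simp
    then show False using e v by simp
  qed
qed

lemma kr_summable:
  assumes x: "x \<in> Bset" and q: "0 < q" "q < 1"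
  shows "kawasaki_rate J \<beta> q x summable_on A"
    and "(\<Sum>\<^sub>\<infinity>y\<in>A. kawasaki_rate J \<beta> q x y) \<le> q powr (- real_of_int (Gi x)) / (1 - q)^2"
proof -
  have bd: "sum (kawasaki_rate J \<beta> q x) F \<le> q powr (- real_of_int (Gi x)) / (1 - q)^2" if "finite F" for F
    by (rule rate_sum_bound[OF x q that])
  show s: "kawasaki_rate J \<beta> q x summable_on A"
  proof (rule nonneg_bdd_above_summable_on)
    show "bdd_above (sum (kawasaki_rate J \<beta> q x) ` {F. F \<subseteq> A \<and> finite F})"
      by (rule bdd_aboveI2[where M = "q powr (- real_of_int (Gi x)) / (1 - q)^2"]) (use bd in auto)
  qed (use kr_nonneg[OF q(1)] in auto)
  show "(\<Sum>\<^sub>\<infinity>y\<in>A. kawasaki_rate J \<beta> q x y) \<le> q powr (- real_of_int (Gi x)) / (1 - q)^2"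
    by (rule infsum_le_finite_sums[OF s]) (use bd in auto)
qed

lemma ham_nonneg:
  assumes "\<forall>i j. J i j \<ge> 0"
  shows "hamiltonian J x \<ge> 0"
  unfolding hamiltonian_def using assms by (auto intro!: infsum_nonneg)

theorem proposition6p3:
  fixes J :: "int \<Rightarrow> int \<Rightarrow> real" and \<beta> q c :: real and n :: int
  assumes "\<forall>i j. J i j = J j i" and "\<forall>i j. J i j \<ge> 0" and "\<forall>i. J i i = 0"
    and "\<beta> \<ge> 0" and "0 < q" and "q < 1"
    and "concentrated_on_B J \<beta> q c"
  shows "prob_dist_on (Bn n) (nu J \<beta> q c n)
       \<and> stationary_on (Bn n) (kawasaki_rate J \<beta> q) (nu J \<beta> q c n)
       \<and> (\<forall>p. prob_dist_on (Bn n) p \<and> stationary_on (Bn n) (kawasaki_rate J \<beta> q) p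
              \<longrightarrow> (\<forall>\<sigma>\<in>Bn n. p \<sigma> = nu J \<beta> q c n \<sigma>))"
proof -
  note Jsym = assms(1) and Jnn = assms(2) and bnn = assms(4) and conc = assms(7)
  have q0: "0 < q" "q < 1" using assms(5,6) by auto
  define S where "S = Bn n"
  define gw where "gw = gibbs_weight J \<beta> q c"
  define Z where "Z = (\<Sum>\<^sub>\<infinity>\<tau>\<in>Bset. gw \<tau>)"
  define r where "r = kawasaki_rate J \<beta> q"
  define \<nu> where "\<nu> = nu J \<beta> q c n"
  define \<mu> where "\<mu> = mu J \<beta> q c"
  have Zpos: "Z > 0" and gwsum: "gw summable_on Bset"
    using conc unfolding concentrated_on_B_def Z_def gw_def by auto
  have gwpos: "gw x > 0" for x unfolding gw_def gibbs_weight_def using q0 by simp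
  have SB: "S \<subseteq> Bset" by (auto simp: S_def Bn_def)
  have mu_eq: "\<mu> x = gw x / Z" if "x \<in> Bset" for x
    unfolding \<mu>_def mu_def gw_def Z_def using that by simp
  have mu_nn: "\<mu> x \<ge> 0" if "x \<in> S" for x
    using mu_eq[of x] SB that gwpos[of x] Zpos by auto
  have musum: "\<mu> summable_on S"
  proof -
    have "(\<lambda>x. gw x * (1/Z)) summable_on Bset" by (rule summable_on_cmult_left[OF gwsum])
    then have "(\<lambda>x. gw x * (1/Z)) summable_on S" using summable_on_subset_banach SB by blast
    then show ?thesis by (rule summable_on_cong[THEN iffD1, rotated]) (use mu_eq SB in auto)
  qed
  define Zn where "Zn = (\<Sum>\<^sub>\<infinity>\<tau>\<in>S. \<mu> \<tau>)"
  have stepS: "stepc n \<in> S" using stepc_Bset[of n] Ncount_stepc[of n] unfolding S_def Bn_def by simp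
  have Znpos: "Zn > 0"
  proof -
    have "(\<Sum>\<^sub>\<infinity>\<tau>\<in>{stepc n}. \<mu> \<tau>) \<le> Zn"
      unfolding Zn_def by (rule infsum_mono_neutral) (use musum stepS mu_nn in auto)
    moreover have "\<mu> (stepc n) > 0" using mu_eq[OF stepc_Bset] gwpos Zpos by simp
    ultimately show ?thesis by simp
  qed
  have nuS: "\<nu> x = gw x / (Z * Zn)" if "x \<in> S" for x
  proof -
    have "Ncount x = n" "x \<in> Bset" using that by (auto simp: S_def Bn_def)
    then show ?thesis unfolding \<nu>_def nu_def \<mu>_def[symmetric] S_def[symmetric] Zn_def[symmetric]
      using mu_eq by simp
  qed
  have nupos: "\<nu> x > 0" if "x \<in> S" for x using nuS[OF that] gwpos Zpos Znpos by simp
  have rnn: "r x y \<ge> 0" for x y unfolding r_def by (rule kr_nonneg[OF q0(1)])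
  have db: "\<nu> x * r x y = \<nu> y * r y x" if "x \<in> S" "y \<in> S" for x y
  proof -
    have "gw x * r x y = gw y * r y x"
      unfolding gw_def r_def by (rule db_kr[OF Jsym conc _ q0(1)]) (use that SB in auto)
    then show ?thesis unfolding nuS[OF that(1)] nuS[OF that(2)] by (simp add: field_simps)
  qed
  have rsum: "r x summable_on A" if "x \<in> S" for x A
    unfolding r_def by (rule kr_summable(1)) (use that SB q0 in auto)
  have nu_hs: "(\<nu> has_sum 1) S"
  proof -
    have "((\<lambda>x. \<mu> x * (1/Zn)) has_sum (Zn * (1/Zn))) S"
      by (rule has_sum_cmult_left) (use musum in \<open>simp add: Zn_def\<close>)
    then have "((\<lambda>x. \<mu> x * (1/Zn)) has_sum 1) S" using Znpos by simp
    then show ?thesis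
    proof (rule has_sum_cong[THEN iffD1, rotated])
      fix x assume x: "x \<in> S"
      then have "Ncount x = n" "x \<in> Bset" by (auto simp: S_def Bn_def)
      then show "\<mu> x * (1/Zn) = \<nu> x" unfolding \<nu>_def nu_def \<mu>_def[symmetric] S_def[symmetric] Zn_def[symmetric]
        by simp
    qed
  qed
  have A: "prob_dist_on S \<nu>"
    unfolding prob_dist_on_def using nu_hs nupos by (auto simp: less_imp_le)
  have B: "stationary_on S r \<nu>"
    unfolding stationary_on_def
  proof (intro ballI conjI)
    fix y assume y: "y \<in> S"
    show "r y summable_on (S - {y})" by (rule rsum[OF y])
    have "((\<lambda>x. \<nu> y * r y x) has_sum (\<nu> y * (\<Sum>\<^sub>\<infinity>z\<in>S - {y}. r y z))) (S - {y})"
      by (rule has_sum_cmult_right, rule has_sum_infsum, rule rsum[OF y])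
    then show "((\<lambda>x. \<nu> x * r x y) has_sum (\<nu> y * (\<Sum>\<^sub>\<infinity>z\<in>S - {y}. r y z))) (S - {y})"
      by (rule has_sum_cong[THEN iffD1, rotated]) (use db y in auto)
  qed
  have C: "\<forall>\<sigma>\<in>S. p \<sigma> = \<nu> \<sigma>" if pd: "prob_dist_on S p" and ps: "stationary_on S r p" for p
  proof -
    define h where "h x = p x / \<nu> x" for x
    define cc where "cc x y = \<nu> x * r x y" for x y
    have pnn: "p x \<ge> 0" if "x \<in> S" for x using pd that unfolding prob_dist_on_def by auto
    have p_hs: "(p has_sum 1) S" using pd unfolding prob_dist_on_def by auto
    have const: "\<forall>x\<in>S. \<forall>y\<in>S. h x = h y"
    proof (rule liouville[where c = cc])
      show "cc x y = cc y x" if "x \<in> S" "y \<in> S" for x y unfolding cc_def using db[OF that] .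
      show "cc x y \<ge> 0" if "x \<in> S" "y \<in> S" for x y unfolding cc_def using nupos[OF that(1)] rnn[of x y] by simp
      show "h x \<ge> 0" if "x \<in> S" for x unfolding h_def using pnn[OF that] nupos[OF that] by simp
      show "(\<lambda>(x,y). cc x y) summable_on S \<times> S"
      proof (rule nonneg_bdd_above_summable_on)
        show "\<And>x. x \<in> S \<times> S \<Longrightarrow> 0 \<le> (case x of (x, y) \<Rightarrow> cc x y)"
          using nupos rnn by (auto simp: cc_def less_imp_le)
        define K where "K = q powr (- 2 * c * real_of_int n) / (Z * Zn * (1 - q)^2)"
        define E2 where "E2 = exp (1 / (1 - q)) * exp (1 / (1 - q))"
        have Kpos: "K \<ge> 0" unfolding K_def using Zpos Znpos by simp
        have perx: "\<nu> x * (q powr (- real_of_int (Gi x)) / (1 - q)^2) \<le> K * q powr real_of_int (Gi x)"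
          if x: "x \<in> S" for x
        proof -
          have xB: "x \<in> Bset" and Nx: "Ncount x = n" using x by (auto simp: S_def Bn_def)
          have "exp (- \<beta> * hamiltonian J x) \<le> 1"
            using ham_nonneg[OF Jnn, of x] bnn by (simp add: mult_nonneg_nonneg)
          then have gle: "gw x \<le> q powr f_c c x"
            unfolding gw_def gibbs_weight_def using mult_right_mono[of _ 1 "q powr f_c c x"] by simp
          have fx: "f_c c x = 2 * real_of_int (Gi x) - 2 * c * real_of_int n"
            using f_c_alt[OF xB, of c] Nx by simp
          have pe: "q powr f_c c x * q powr (- real_of_int (Gi x)) = q powr (- 2 * c * real_of_int n) * q powr real_of_int (Gi x)"
            unfolding fx powr_add[symmetric] by (simp add: algebra_simps)
          have "\<nu> x * (q powr (- real_of_int (Gi x)) / (1 - q)^2) = gw x * q powr (- real_of_int (Gi x)) / (Z * Zn * (1 - q)^2)"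
            unfolding nuS[OF x] by simp
          also have "\<dots> \<le> q powr f_c c x * q powr (- real_of_int (Gi x)) / (Z * Zn * (1 - q)^2)"
            using gle Zpos Znpos q0 by (intro divide_right_mono mult_right_mono) auto
          also have "\<dots> = K * q powr real_of_int (Gi x)" unfolding pe K_def by simp
          finally show ?thesis .
        qed
        show "bdd_above (sum (\<lambda>(x,y). cc x y) ` {F. F \<subseteq> S \<times> S \<and> finite F})"
        proof (rule bdd_aboveI2[where M = "K * E2"])
          fix P assume P: "P \<in> {F. F \<subseteq> S \<times> S \<and> finite F}"
          then have PS: "P \<subseteq> S \<times> S" and finP: "finite P" by auto
          have fS: "fst ` P \<subseteq> S" and sS: "snd ` P \<subseteq> S" using PS by auto
          have "sum (\<lambda>(x,y). cc x y) P \<le> sum (\<lambda>(x,y). cc x y) (fst ` P \<times> snd ` P)"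
            by (rule sum_mono2) (use finP subset_fst_snd[of P] fS sS nupos rnn in \<open>auto simp: cc_def less_imp_le\<close>)
          also have "\<dots> = (\<Sum>x\<in>fst ` P. \<nu> x * (\<Sum>y\<in>snd ` P. r x y))"
            by (simp add: sum.cartesian_product[symmetric] cc_def sum_distrib_left)
          also have "\<dots> \<le> (\<Sum>x\<in>fst ` P. \<nu> x * (q powr (- real_of_int (Gi x)) / (1 - q)^2))"
          proof (rule sum_mono)
            fix x assume x: "x \<in> fst ` P"
            have "(\<Sum>y\<in>snd ` P. r x y) \<le> q powr (- real_of_int (Gi x)) / (1 - q)^2"
              unfolding r_def by (rule rate_sum_bound) (use x fS SB q0 finP in auto)
            then show "\<nu> x * (\<Sum>y\<in>snd ` P. r x y) \<le> \<nu> x * (q powr (- real_of_int (Gi x)) / (1 - q)^2)"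
              using nupos[of x] x fS by (intro mult_left_mono) auto
          qed
          also have "\<dots> \<le> (\<Sum>x\<in>fst ` P. K * q powr real_of_int (Gi x))"
            by (rule sum_mono) (use perx fS in auto)
          also have "\<dots> = K * (\<Sum>x\<in>fst ` P. q powr real_of_int (Gi x))" by (simp add: sum_distrib_left)
          also have "\<dots> \<le> K * E2" unfolding E2_def
            by (rule mult_left_mono[OF Gi_sum_bound Kpos]) (use finP fS SB q0 in auto)
          finally show "sum (\<lambda>(x,y). cc x y) P \<le> K * E2" .
        qed
      qed
      show "((\<lambda>x. cc y x * h x) has_sum (h y * (\<Sum>\<^sub>\<infinity>x\<in>S. cc y x))) S" if y: "y \<in> S" for y
      proof -
        define R where "R = (\<Sum>\<^sub>\<infinity>z\<in>S - {y}. r y z)"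
        have st: "((\<lambda>x. p x * r x y) has_sum (p y * R)) (S - {y})"
          using ps y unfolding stationary_on_def R_def by auto
        have "((\<lambda>x. cc y x * h x) has_sum (p y * R)) (S - {y})"
        proof (rule has_sum_cong[THEN iffD1, OF _ st])
          fix x assume x: "x \<in> S - {y}"
          then have xS: "x \<in> S" by simp
          show "p x * r x y = cc y x * h x"
            unfolding cc_def h_def db[OF y xS] using nupos[OF xS] by simp
        qed
        then have "((\<lambda>x. cc y x * h x) has_sum (cc y y * h y + p y * R)) (insert y (S - {y}))"
          by (rule has_sum_insert[rotated]) simp
        moreover have "insert y (S - {y}) = S" using y by auto
        moreover have "cc y y = 0" unfolding cc_def r_def by (simp add: kr_diag)
        moreover have "h y * (\<Sum>\<^sub>\<infinity>x\<in>S. cc y x) = p y * R"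
        proof -
          have "(\<Sum>\<^sub>\<infinity>x\<in>S. cc y x) = \<nu> y * (\<Sum>\<^sub>\<infinity>x\<in>S. r y x)"
            unfolding cc_def by (rule infsum_cmult_right')
          also have "(\<Sum>\<^sub>\<infinity>x\<in>S. r y x) = R"
            unfolding R_def by (rule infsum_cong_neutral) (auto simp: r_def kr_diag)
          finally show ?thesis unfolding h_def using nupos[OF y] by simp
        qed
        ultimately show ?thesis by simp
      qed
      show "\<forall>x\<in>S. \<forall>y\<in>S. u x = u y" if hu: "\<forall>x\<in>S. \<forall>y\<in>S. cc x y > 0 \<longrightarrow> u x = u y" for u :: "(int \<Rightarrow> int) \<Rightarrow> real"
      proof -
        have "u x = u (stepc n)" if "x \<in> S" for x
        proof (rule connect_step[of n u x])
          show "x \<in> Bn n" using that by (simp add: S_def)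
          fix y k l assume yS: "y \<in> Bn n" and v: "y k = 1" "y l = -1" and kl: "k < l"
          have y: "y \<in> Bset" and Ny: "Ncount y = n" using yS by (auto simp: Bn_def)
          have zS: "swap_spins y k l \<in> S"
            using swap_in_Bset[OF y] swap_counts[OF y v] Ny unfolding S_def Bn_def by auto
          have "cc y (swap_spins y k l) > 0"
            unfolding cc_def r_def kr_swap[of y k l, OF v]
            using nupos[of y] yS move_rate_bounds(1)[OF q0(1), of J \<beta> y k l] by (simp add: S_def)
          then show "u y = u (swap_spins y k l)" using hu yS zS by (auto simp: S_def)
        qed
        then show ?thesis by simp
      qed
    qed
    define \<kappa> where "\<kappa> = h (stepc n)"
    have pk: "p x = \<kappa> * \<nu> x" if "x \<in> S" for x
      using const stepS that nupos[OF that] unfolding \<kappa>_def h_def by (metis divide_eq_eq less_irrefl)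
    have "((\<lambda>x. \<kappa> * \<nu> x) has_sum (\<kappa> * 1)) S" by (rule has_sum_cmult_right[OF nu_hs])
    then have "((\<lambda>x. \<kappa> * \<nu> x) has_sum \<kappa>) S" by simp
    then have "(p has_sum \<kappa>) S" by (rule has_sum_cong[THEN iffD1, rotated]) (use pk in auto)
    then have "\<kappa> = 1" using has_sum_unique p_hs by blast
    then show ?thesis using pk by simp
  qed
  show ?thesis using A B C unfolding S_def r_def \<nu>_def by blast
qed

end
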